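(* Let $\phi\colon F\to G$ and $\psi\colon G\to H$ be transformations (of types $|\alpha|\xrightarrow{\sigma}n\xleftarrow{\tau}|\beta|$ and $|\beta|\xrightarrow{\eta}m\xleftarrow{\theta}|\gamma|$, with $F\colon\mathbb B^\alpha\to\mathbb C$, $G\colon\mathbb B^\beta\to\mathbb C$, $H\colon\mathbb B^\gamma\to\mathbb C$) which are dinatural in all their variables. If the composite graph $\Gamma(\psi)\circ\Gamma(\phi)$ is acyclic, then $\psi\circ\phi$ is dinatural in all its variables.
   Context: Notation: for $k\in\mathbb N$, $k$ also denotes $\{1,\dots,k\}$. For $\alpha\in\{+,-\}^*$, $\mathbb B^\alpha=\mathbb B^{\alpha_1}\times\cdots\times\mathbb B^{\alpha_{|\alpha|}}$ with $\mathbb B^+=\mathbb B$, $\mathbb B^-=\mathbb B^{op}$. For $\mathbf A=(A_1,\dots,A_n)$ and $\sigma\colon k\to n$, $\mathbf A\sigma=(A_{\sigma1},\dots,A_{\sigma k})$. A morphism $f\colon A\to B$ placed in a contravariant argument is regarded as a morphism $B\to A$ of $\mathbb B^{op}$. A transformation $\phi\colon F\to G$ of type $|\alpha|\xrightarrow{\sigma}n\xleftarrow{\tau}|\beta|$ ($\sigma,\tau$ arbitrary functions) is a family $\phi_{\mathbf A}\colon F(\mathbf A\sigma)\to G(\mathbf A\tau)$, $\mathbf A\in\mathrm{Ob}(\mathbb B)^n$; $A_i$ is its $i$-th variable. $\mathbf A[X,Y/i]\sigma$ is the tuple whose $j$-th entry is $X$ if $\sigma j=i,\alpha_j=-$, $Y$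 if $\sigma j=i,\alpha_j=+$, and $A_{\sigma j}$ (or $1_{A_{\sigma j}}$ when $X,Y$ are morphisms) otherwise; $\mathbf A[X/i]=\mathbf A[X,X/i]$. $\phi$ is dinatural in its $i$-th variable if for all objects $A_j$ ($j\neq i$) and all $f\colon A\to B$: $G(\mathbf A[A,f/i]\tau)\circ\phi_{\mathbf A[A/i]}\circ F(\mathbf A[f,A/i]\sigma)=G(\mathbf A[f,B/i]\tau)\circ\phi_{\mathbf A[B/i]}\circ F(\mathbf A[B,f/i]\sigma)$. Vertical composite: with $\zeta\colon n\to l$, $\xi\colon m\to l$ a pushout of $\tau,\eta$ in finite sets, $\psi\circ\phi$ has type $|\alpha|\xrightarrow{\zeta\sigma}l\xleftarrow{\xi\theta}|\gamma|$ and components $(\psi\circ\phi)_{\mathbf A}=\psi_{\mathbf A\xi}\circ\phi_{\mathbf A\zeta}$. Composite graph $\Gamma(\psi)\circ\Gamma(\phi)$: directed bipartite graph with places the disjoint union of $|\alpha|,|\beta|,|\gamma|$ and transitions $n\sqcup m$. For $t\in n$: arc from place $j$ of the $\alpha$-block to $t$ iff $\sigma j=t,\alpha_j=+$; from $t$ to it iff $\sigma j=t,\alpha_j=-$; arc from place $j$ of the $\beta$-block to $t$ iff $\tau j=t,\beta_j=-$; from $t$ to it iff $\tau j=t,\beta_j=+$. For $t\in m$: arc from place $j$ of the $\beta$-block to $t$ iff $\eta j=t,\beta_j=+$; from $t$ to it iff $\eta j=t,\beta_j=-$; arc from place $j$ of the $\gamma$-block to $t$ iff $\theta j=t,\gamma_j=-$;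 from $t$ to it iff $\theta j=t,\gamma_j=+$. Acyclic means without directed cycles. *)

theory Defs
  imports Main
begin

(* A category, given by its objects, arrows, domain, codomain, identities and composition
   (ccomp g f = g o f). *)
record ('o,'m) category =
  cobj :: "'o set"
  carr :: "'m set"
  cdom :: "'m \<Rightarrow> 'o"
  ccod :: "'m \<Rightarrow> 'o"
  cid  :: "'o \<Rightarrow> 'm"
  ccomp :: "'m \<Rightarrow> 'm \<Rightarrow> 'm"

definition hom :: "('o,'m,'x) category_scheme \<Rightarrow> 'o \<Rightarrow> 'o \<Rightarrow> 'm set" where
  "hom C X Y = {f \<in> carr C. cdom C f = X \<and> ccod C f = Y}"

definition is_category :: "('o,'m,'x) category_scheme \<Rightarrow> bool" where
  "is_category C \<longleftrightarrow>
     (\<forall>f\<in>carr C. cdom C f \<in> cobj C \<and> ccod C f \<in> cobj C) \<and>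
     (\<forall>A\<in>cobj C. cid C A \<in> hom C A A) \<and>
     (\<forall>f\<in>carr C. \<forall>g\<in>carr C. ccod C f = cdom C g \<longrightarrow>
          ccomp C g f \<in> hom C (cdom C f) (ccod C g)) \<and>
     (\<forall>f\<in>carr C. ccomp C f (cid C (cdom C f)) = f \<and> ccomp C (cid C (ccod C f)) f = f) \<and>
     (\<forall>f\<in>carr C. \<forall>g\<in>carr C. \<forall>h\<in>carr C. ccod C f = cdom C g \<longrightarrow> ccod C g = cdom C h \<longrightarrow>
          ccomp C h (ccomp C g f) = ccomp C (ccomp C h g) f)"

(* Variance words alpha \<in> {+,-}^*: True = +, False = -.
   An object of B^alpha is a list of objects of B of length |alpha|; a morphism of B^alpha
   is a list of morphisms of B, where an entry f : A \<rightarrow> B of B in a contravariant position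
   is regarded as the morphism B \<rightarrow> A of B^op. *)

definition msrc :: "('o,'m,'x) category_scheme \<Rightarrow> bool list \<Rightarrow> 'm list \<Rightarrow> 'o list" where
  "msrc B \<alpha> fs = map (\<lambda>j. if \<alpha>!j then cdom B (fs!j) else ccod B (fs!j)) [0..<length \<alpha>]"

definition mtgt :: "('o,'m,'x) category_scheme \<Rightarrow> bool list \<Rightarrow> 'm list \<Rightarrow> 'o list" where
  "mtgt B \<alpha> fs = map (\<lambda>j. if \<alpha>!j then ccod B (fs!j) else cdom B (fs!j)) [0..<length \<alpha>]"

definition mcomp :: "('o,'m,'x) category_scheme \<Rightarrow> bool list \<Rightarrow> 'm list \<Rightarrow> 'm list \<Rightarrow> 'm list" where
  "mcomp B \<alpha> gs fs = map (\<lambda>j. if \<alpha>!j then ccomp B (gs!j) (fs!j) else ccomp B (fs!j) (gs!j)) [0..<length \<alpha>]"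

definition mvfunctor :: "('o,'m,'x) category_scheme \<Rightarrow> ('c,'d,'y) category_scheme \<Rightarrow> bool list
    \<Rightarrow> ('o list \<Rightarrow> 'c) \<Rightarrow> ('m list \<Rightarrow> 'd) \<Rightarrow> bool" where
  "mvfunctor B C \<alpha> Fo Fm \<longleftrightarrow>
     (\<forall>As. length As = length \<alpha> \<and> set As \<subseteq> cobj B \<longrightarrow> Fo As \<in> cobj C) \<and>
     (\<forall>fs. length fs = length \<alpha> \<and> set fs \<subseteq> carr B \<longrightarrow>
          Fm fs \<in> hom C (Fo (msrc B \<alpha> fs)) (Fo (mtgt B \<alpha> fs))) \<and>
     (\<forall>As. length As = length \<alpha> \<and> set As \<subseteq> cobj B \<longrightarrow> Fm (map (cid B) As) = cid C (Fo As)) \<and>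
     (\<forall>fs gs. length fs = length \<alpha> \<and> set fs \<subseteq> carr B \<and> length gs = length \<alpha> \<and> set gs \<subseteq> carr B
          \<and> mtgt B \<alpha> fs = msrc B \<alpha> gs \<longrightarrow>
          Fm (mcomp B \<alpha> gs fs) = ccomp C (Fm gs) (Fm fs))"

(* A sigma  for  sigma : k \<rightarrow> n, with k, n identified with {0..<k}, {0..<n} *)
definition reidx :: "(nat \<Rightarrow> nat) \<Rightarrow> nat \<Rightarrow> 'a list \<Rightarrow> 'a list" where
  "reidx \<sigma> k As = map (\<lambda>j. As ! (\<sigma> j)) [0..<k]"

definition is_transformation :: "('o,'m,'x) category_scheme \<Rightarrow> ('c,'d,'y) category_scheme
    \<Rightarrow> bool list \<Rightarrow> bool list \<Rightarrow> (nat \<Rightarrow> nat) \<Rightarrow> (nat \<Rightarrow> nat) \<Rightarrow> nat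
    \<Rightarrow> ('o list \<Rightarrow> 'c) \<Rightarrow> ('o list \<Rightarrow> 'c) \<Rightarrow> ('o list \<Rightarrow> 'd) \<Rightarrow> bool" where
  "is_transformation B C \<alpha> \<beta> \<sigma> \<tau> n Fo Go \<phi> \<longleftrightarrow>
     (\<forall>j<length \<alpha>. \<sigma> j < n) \<and> (\<forall>j<length \<beta>. \<tau> j < n) \<and>
     (\<forall>As. length As = n \<and> set As \<subseteq> cobj B \<longrightarrow>
        \<phi> As \<in> hom C (Fo (reidx \<sigma> (length \<alpha>) As)) (Go (reidx \<tau> (length \<beta>) As)))"

definition msubst :: "('o,'m,'x) category_scheme \<Rightarrow> bool list \<Rightarrow> (nat \<Rightarrow> nat) \<Rightarrow> 'o list
    \<Rightarrow> nat \<Rightarrow> 'm \<Rightarrow> 'm \<Rightarrow> 'm list" where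
  "msubst B \<alpha> \<sigma> As i X Y =
     map (\<lambda>j. if \<sigma> j = i then (if \<alpha>!j then Y else X) else cid B (As ! (\<sigma> j))) [0..<length \<alpha>]"

definition dinatural_in :: "('o,'m,'x) category_scheme \<Rightarrow> ('c,'d,'y) category_scheme
    \<Rightarrow> bool list \<Rightarrow> bool list \<Rightarrow> (nat \<Rightarrow> nat) \<Rightarrow> (nat \<Rightarrow> nat) \<Rightarrow> nat
    \<Rightarrow> ('m list \<Rightarrow> 'd) \<Rightarrow> ('m list \<Rightarrow> 'd) \<Rightarrow> ('o list \<Rightarrow> 'd) \<Rightarrow> nat \<Rightarrow> bool" where
  "dinatural_in B C \<alpha> \<beta> \<sigma> \<tau> n Fm Gm \<phi> i \<longleftrightarrow>
     (\<forall>As f. length As = n \<and> set As \<subseteq> cobj B \<and> f \<in> carr B \<longrightarrow>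
        (let A = cdom B f; A' = ccod B f in
         ccomp C (Gm (msubst B \<beta> \<tau> As i (cid B A) f))
           (ccomp C (\<phi> (As[i := A])) (Fm (msubst B \<alpha> \<sigma> As i f (cid B A))))
       = ccomp C (Gm (msubst B \<beta> \<tau> As i f (cid B A')))
           (ccomp C (\<phi> (As[i := A'])) (Fm (msubst B \<alpha> \<sigma> As i (cid B A') f)))))"

(* zeta : n \<rightarrow> l, xi : m \<rightarrow> l is a pushout of tau : p \<rightarrow> n, eta : p \<rightarrow> m in finite sets
   (finite sets represented, up to bijection, by {0..<q}) *)
definition is_pushout :: "nat \<Rightarrow> nat \<Rightarrow> nat \<Rightarrow> (nat \<Rightarrow> nat) \<Rightarrow> (nat \<Rightarrow> nat)
    \<Rightarrow> nat \<Rightarrow> (nat \<Rightarrow> nat) \<Rightarrow> (nat \<Rightarrow> nat) \<Rightarrow> bool" where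
  "is_pushout n m p \<tau> \<eta> l \<zeta> \<xi> \<longleftrightarrow>
     (\<forall>k<n. \<zeta> k < l) \<and> (\<forall>k<m. \<xi> k < l) \<and> (\<forall>j<p. \<zeta> (\<tau> j) = \<xi> (\<eta> j)) \<and>
     (\<forall>(q::nat) z x. (\<forall>k<n. z k < q) \<and> (\<forall>k<m. x k < q) \<and> (\<forall>j<p. z (\<tau> j) = x (\<eta> j)) \<longrightarrow>
        (\<exists>u. (\<forall>k<l. u k < q) \<and> (\<forall>k<n. u (\<zeta> k) = z k) \<and> (\<forall>k<m. u (\<xi> k) = x k) \<and>
             (\<forall>u'. (\<forall>k<l. u' k < q) \<and> (\<forall>k<n. u' (\<zeta> k) = z k) \<and> (\<forall>k<m. u' (\<xi> k) = x k)
                   \<longrightarrow> (\<forall>k<l. u' k = u k))))"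

definition vcomp :: "('c,'d,'y) category_scheme \<Rightarrow> nat \<Rightarrow> nat \<Rightarrow> (nat \<Rightarrow> nat) \<Rightarrow> (nat \<Rightarrow> nat)
    \<Rightarrow> ('o list \<Rightarrow> 'd) \<Rightarrow> ('o list \<Rightarrow> 'd) \<Rightarrow> 'o list \<Rightarrow> 'd" where
  "vcomp C n m \<zeta> \<xi> \<phi> \<psi> As = ccomp C (\<psi> (reidx \<xi> m As)) (\<phi> (reidx \<zeta> n As))"

(* nodes of the composite graph: places of the alpha-, beta-, gamma-blocks, transitions in n and m *)
datatype node = PA nat | PB nat | PC nat | TN nat | TM nat

definition comp_graph :: "bool list \<Rightarrow> bool list \<Rightarrow> bool list \<Rightarrow> (nat \<Rightarrow> nat) \<Rightarrow> (nat \<Rightarrow> nat)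
    \<Rightarrow> (nat \<Rightarrow> nat) \<Rightarrow> (nat \<Rightarrow> nat) \<Rightarrow> (node \<times> node) set" where
  "comp_graph \<alpha> \<beta> \<gamma> \<sigma> \<tau> \<eta> \<theta> =
      {(PA j, TN (\<sigma> j)) | j. j < length \<alpha> \<and> \<alpha>!j}
    \<union> {(TN (\<sigma> j), PA j) | j. j < length \<alpha> \<and> \<not> \<alpha>!j}
    \<union> {(PB j, TN (\<tau> j)) | j. j < length \<beta> \<and> \<not> \<beta>!j}
    \<union> {(TN (\<tau> j), PB j) | j. j < length \<beta> \<and> \<beta>!j}
    \<union> {(PB j, TM (\<eta> j)) | j. j < length \<beta> \<and> \<beta>!j}
    \<union> {(TM (\<eta> j), PB j) | j. j < length \<beta> \<and> \<not> \<beta>!j}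
    \<union> {(PC j, TM (\<theta> j)) | j. j < length \<gamma> \<and> \<not> \<gamma>!j}
    \<union> {(TM (\<theta> j), PC j) | j. j < length \<gamma> \<and> \<gamma>!j}"

end

theory Submission
  imports Defs
begin


lemma homI: "f \<in> carr C \<Longrightarrow> cdom C f = X \<Longrightarrow> ccod C f = Y \<Longrightarrow> f \<in> hom C X Y"
  by (simp add: hom_def)
lemma homD: "f \<in> hom C X Y \<Longrightarrow> f \<in> carr C \<and> cdom C f = X \<and> ccod C f = Y"
  by (simp add: hom_def)

lemma cat_comp: "is_category C \<Longrightarrow> f \<in> hom C X Y \<Longrightarrow> g \<in> hom C Y Z \<Longrightarrow> ccomp C g f \<in> hom C X Z"
  unfolding is_category_def hom_def by auto
lemma cat_assoc: "is_category C \<Longrightarrow> f \<in> hom C X Y \<Longrightarrow> g \<in> hom C Y Z \<Longrightarrow> h \<in> hom C Z W \<Longrightarrow>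
   ccomp C h (ccomp C g f) = ccomp C (ccomp C h g) f"
  unfolding is_category_def hom_def by auto
lemma cat_id: "is_category C \<Longrightarrow> X \<in> cobj C \<Longrightarrow> cid C X \<in> hom C X X"
  unfolding is_category_def by auto
lemma cat_idl: "is_category C \<Longrightarrow> f \<in> hom C X Y \<Longrightarrow> ccomp C (cid C Y) f = f"
  unfolding is_category_def hom_def by auto
lemma cat_idr: "is_category C \<Longrightarrow> f \<in> hom C X Y \<Longrightarrow> ccomp C f (cid C X) = f"
  unfolding is_category_def hom_def by auto
lemma cat_objs: "is_category C \<Longrightarrow> f \<in> carr C \<Longrightarrow> cdom C f \<in> cobj C \<and> ccod C f \<in> cobj C"
  unfolding is_category_def by auto

lemma assoc5:
  assumes "is_category C" "a \<in> hom C P Q" "b \<in> hom C R P" "c \<in> hom C S R" "d \<in> hom C T S" "e \<in> hom C U T"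
  shows "ccomp C (ccomp C a b) (ccomp C c (ccomp C d e)) = ccomp C a (ccomp C (ccomp C b (ccomp C c d)) e)"
proof -
  have cd: "ccomp C c d \<in> hom C T R" using assms cat_comp by metis
  have bcd: "ccomp C b (ccomp C c d) \<in> hom C T P" using assms cd cat_comp by metis
  have "ccomp C c (ccomp C d e) = ccomp C (ccomp C c d) e" using assms cat_assoc by metis
  then have "ccomp C (ccomp C a b) (ccomp C c (ccomp C d e)) = ccomp C (ccomp C a b) (ccomp C (ccomp C c d) e)" by simp
  also have "\<dots> = ccomp C a (ccomp C b (ccomp C (ccomp C c d) e))"
    using assms cd cat_comp cat_assoc by metis
  also have "\<dots> = ccomp C a (ccomp C (ccomp C b (ccomp C c d)) e)"
    using assms cd cat_assoc by metis
  finally show ?thesis .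
qed

lemma fun_hom: "mvfunctor B C \<alpha> Fo Fm \<Longrightarrow> length fs = length \<alpha> \<Longrightarrow> set fs \<subseteq> carr B \<Longrightarrow>
   msrc B \<alpha> fs = Xs \<Longrightarrow> mtgt B \<alpha> fs = Ys \<Longrightarrow> Fm fs \<in> hom C (Fo Xs) (Fo Ys)"
  unfolding mvfunctor_def by blast
lemma fun_comp: "mvfunctor B C \<alpha> Fo Fm \<Longrightarrow> length fs = length \<alpha> \<Longrightarrow> set fs \<subseteq> carr B \<Longrightarrow>
   length gs = length \<alpha> \<Longrightarrow> set gs \<subseteq> carr B \<Longrightarrow> mtgt B \<alpha> fs = msrc B \<alpha> gs \<Longrightarrow>
   Fm (mcomp B \<alpha> gs fs) = ccomp C (Fm gs) (Fm fs)"
  unfolding mvfunctor_def by blast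
lemma fun_id: "mvfunctor B C \<alpha> Fo Fm \<Longrightarrow> length As = length \<alpha> \<Longrightarrow> set As \<subseteq> cobj B \<Longrightarrow>
   Fm (map (cid B) As) = cid C (Fo As)"
  unfolding mvfunctor_def by blast

lemma mtgt_nth: "j < length \<alpha> \<Longrightarrow> mtgt B \<alpha> fs ! j = (if \<alpha>!j then ccod B (fs!j) else cdom B (fs!j))"
  by (simp add: mtgt_def)
lemma msrc_nth: "j < length \<alpha> \<Longrightarrow> msrc B \<alpha> fs ! j = (if \<alpha>!j then cdom B (fs!j) else ccod B (fs!j))"
  by (simp add: msrc_def)
lemma mtgt_len[simp]: "length (mtgt B \<alpha> fs) = length \<alpha>" by (simp add: mtgt_def)
lemma msrc_len[simp]: "length (msrc B \<alpha> fs) = length \<alpha>" by (simp add: msrc_def)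

lemma mtgt_same: "j < length \<alpha> \<Longrightarrow> fs!j = gs!j \<Longrightarrow> mtgt B \<alpha> fs ! j = mtgt B \<alpha> gs ! j"
  by (simp add: mtgt_nth)
lemma msrc_same: "j < length \<alpha> \<Longrightarrow> fs!j = gs!j \<Longrightarrow> msrc B \<alpha> fs ! j = msrc B \<alpha> gs ! j"
  by (simp add: msrc_nth)

lemma set_map_upt_sub: "(\<And>j. j < N \<Longrightarrow> g j \<in> X) \<Longrightarrow> set (map g [0..<N]) \<subseteq> X"
  by auto



locale ctx =
  fixes B :: "('o,'m) category" and C :: "('c,'d) category"
    and \<alpha> \<beta> \<gamma> :: "bool list"
    and \<sigma> \<tau> \<eta> \<theta> \<zeta> \<xi> :: "nat \<Rightarrow> nat" and n m l :: nat
    and Fo Go Ho :: "'o list \<Rightarrow> 'c" and Fm Gm Hm :: "'m list \<Rightarrow> 'd"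
    and \<phi> \<psi> :: "'o list \<Rightarrow> 'd"
    and i :: nat and As :: "'o list" and f :: 'm
  assumes catB: "is_category B" and catC: "is_category C"
    and funF: "mvfunctor B C \<alpha> Fo Fm" and funG: "mvfunctor B C \<beta> Go Gm" and funH: "mvfunctor B C \<gamma> Ho Hm"
    and trP: "is_transformation B C \<alpha> \<beta> \<sigma> \<tau> n Fo Go \<phi>"
    and trQ: "is_transformation B C \<beta> \<gamma> \<eta> \<theta> m Go Ho \<psi>"
    and dinP: "\<forall>i<n. dinatural_in B C \<alpha> \<beta> \<sigma> \<tau> n Fm Gm \<phi> i"
    and dinQ: "\<forall>i<m. dinatural_in B C \<beta> \<gamma> \<eta> \<theta> m Gm Hm \<psi> i"
    and po: "is_pushout n m (length \<beta>) \<tau> \<eta> l \<zeta> \<xi>"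
    and i_l: "i < l" and As_len: "length As = l" and As_obj: "set As \<subseteq> cobj B" and f_carr: "f \<in> carr B"
begin

abbreviation "a0 \<equiv> cdom B f"
abbreviation "a1 \<equiv> ccod B f"

lemma sig[simp]: "j < length \<alpha> \<Longrightarrow> \<sigma> j < n" using trP by (simp add: is_transformation_def)
lemma tau[simp]: "j < length \<beta> \<Longrightarrow> \<tau> j < n" using trP by (simp add: is_transformation_def)
lemma eta[simp]: "j < length \<beta> \<Longrightarrow> \<eta> j < m" using trQ by (simp add: is_transformation_def)
lemma theta[simp]: "j < length \<gamma> \<Longrightarrow> \<theta> j < m" using trQ by (simp add: is_transformation_def)
lemma zeta[simp]: "k < n \<Longrightarrow> \<zeta> k < l" using po by (simp add: is_pushout_def)
lemma xi[simp]: "k < m \<Longrightarrow> \<xi> k < l" using po by (simp add: is_pushout_def)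
lemma comm: "j < length \<beta> \<Longrightarrow> \<xi> (\<eta> j) = \<zeta> (\<tau> j)" using po by (simp add: is_pushout_def)
lemma As_nth[simp]: "k < l \<Longrightarrow> As ! k \<in> cobj B" using As_obj As_len by auto
lemma a0_obj[simp]: "a0 \<in> cobj B" and a1_obj[simp]: "a1 \<in> cobj B" using cat_objs[OF catB f_carr] by auto
lemma f_c[simp]: "f \<in> carr B" by (rule f_carr)
lemma idB[simp]: "X \<in> cobj B \<Longrightarrow> cid B X \<in> carr B" "X \<in> cobj B \<Longrightarrow> cdom B (cid B X) = X"
  "X \<in> cobj B \<Longrightarrow> ccod B (cid B X) = X"
  using cat_id[OF catB] by (auto simp: hom_def)
lemma idlB[simp]: "g \<in> carr B \<Longrightarrow> ccod B g = Y \<Longrightarrow> ccomp B (cid B Y) g = g"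
  using catB by (auto simp: is_category_def)
lemma idrB[simp]: "g \<in> carr B \<Longrightarrow> cdom B g = Y \<Longrightarrow> ccomp B g (cid B Y) = g"
  using catB by (auto simp: is_category_def)

definition pm :: "bool \<Rightarrow> bool \<Rightarrow> 'm" where
  "pm s t = (if s then cid B a1 else if t then f else cid B a0)"

lemma pm_carr[simp]: "pm s t \<in> carr B" by (simp add: pm_def)
lemma pm_dom[simp]: "cdom B (pm s t) = (if s then a1 else a0)" by (simp add: pm_def)
lemma pm_cod[simp]: "(s \<longrightarrow> t) \<Longrightarrow> ccod B (pm s t) = (if t then a1 else a0)" by (simp add: pm_def)

definition ob :: "node set \<Rightarrow> node \<Rightarrow> 'o" where
  "ob S x = (case x of TN k \<Rightarrow> (if \<zeta> k = i then (if TN k \<in> S then a1 else a0) else As ! (\<zeta> k))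
     | TM k \<Rightarrow> (if \<xi> k = i then (if TM k \<in> S then a1 else a0) else As ! (\<xi> k)) | _ \<Rightarrow> a0)"

definition X :: "node set \<Rightarrow> 'o list" where "X S = map (\<lambda>k. ob S (TN k)) [0..<n]"
definition Y :: "node set \<Rightarrow> 'o list" where "Y S = map (\<lambda>k. ob S (TM k)) [0..<m]"

definition eF :: "node set \<Rightarrow> 'm list" where
  "eF S = map (\<lambda>j. if \<zeta> (\<sigma> j) = i then (if \<alpha>!j then pm False (TN (\<sigma> j) \<in> S) else pm (TN (\<sigma> j) \<in> S) True)
     else cid B (As ! (\<zeta> (\<sigma> j)))) [0..<length \<alpha>]"
definition gG :: "node set \<Rightarrow> 'm list" where
  "gG S = map (\<lambda>j. if \<zeta> (\<tau> j) = i then (if \<beta>!j then pm (TN (\<tau> j) \<in> S) (TM (\<eta> j) \<in> S)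
        else pm (TM (\<eta> j) \<in> S) (TN (\<tau> j) \<in> S))
     else cid B (As ! (\<zeta> (\<tau> j)))) [0..<length \<beta>]"
definition hH :: "node set \<Rightarrow> 'm list" where
  "hH S = map (\<lambda>j. if \<xi> (\<theta> j) = i then (if \<gamma>!j then pm (TM (\<theta> j) \<in> S) True else pm False (TM (\<theta> j) \<in> S))
     else cid B (As ! (\<xi> (\<theta> j)))) [0..<length \<gamma>]"

definition SrcF :: "'o list" where
  "SrcF = map (\<lambda>j. if \<zeta> (\<sigma> j) = i then (if \<alpha>!j then a0 else a1) else As ! (\<zeta> (\<sigma> j))) [0..<length \<alpha>]"
definition TgtH :: "'o list" where
  "TgtH = map (\<lambda>j. if \<xi> (\<theta> j) = i then (if \<gamma>!j then a1 else a0) else As ! (\<xi> (\<theta> j))) [0..<length \<gamma>]"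

definition UC :: "node set \<Rightarrow> bool" where
  "UC S \<longleftrightarrow> (\<forall>j<length \<beta>. \<zeta> (\<tau> j) = i \<longrightarrow>
      (if \<beta>!j then (TN (\<tau> j) \<in> S \<longrightarrow> TM (\<eta> j) \<in> S) else (TM (\<eta> j) \<in> S \<longrightarrow> TN (\<tau> j) \<in> S)))"

lemma UC_contra: "UC S \<Longrightarrow> j < length \<beta> \<Longrightarrow> \<zeta> (\<tau> j) = i \<Longrightarrow> \<not> \<beta>!j \<Longrightarrow> TN (\<tau> j) \<notin> S \<Longrightarrow> (TM (\<eta> j) \<in> S) = False"
  by (auto simp: UC_def)
lemma UC_co: "UC S \<Longrightarrow> j < length \<beta> \<Longrightarrow> \<zeta> (\<tau> j) = i \<Longrightarrow> \<beta>!j \<Longrightarrow> TM (\<eta> j) \<notin> S \<Longrightarrow> (TN (\<tau> j) \<in> S) = False"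
  by (auto simp: UC_def)

lemma UC_contraD: "UC S \<Longrightarrow> j < length \<beta> \<Longrightarrow> \<zeta> (\<tau> j) = i \<Longrightarrow> \<not> \<beta>!j \<Longrightarrow> TM (\<eta> j) \<in> S \<Longrightarrow> TN (\<tau> j) \<in> S"
  by (auto simp: UC_def)
lemma UC_coD: "UC S \<Longrightarrow> j < length \<beta> \<Longrightarrow> \<zeta> (\<tau> j) = i \<Longrightarrow> \<beta>!j \<Longrightarrow> TN (\<tau> j) \<in> S \<Longrightarrow> TM (\<eta> j) \<in> S"
  by (auto simp: UC_def)

definition E :: "node set \<Rightarrow> 'd" where
  "E S = ccomp C (Hm (hH S)) (ccomp C (\<psi> (Y S)) (ccomp C (Gm (gG S)) (ccomp C (\<phi> (X S)) (Fm (eF S)))))"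

lemma len[simp]: "length (X S) = n" "length (Y S) = m" "length (eF S) = length \<alpha>"
  "length (gG S) = length \<beta>" "length (hH S) = length \<gamma>"
  by (auto simp: X_def Y_def eF_def gG_def hH_def)

lemma X_nth[simp]: "k < n \<Longrightarrow> X S ! k = ob S (TN k)" by (simp add: X_def)
lemma Y_nth[simp]: "k < m \<Longrightarrow> Y S ! k = ob S (TM k)" by (simp add: Y_def)
lemma ob_obj[simp]: "x = TN k \<and> k < n \<or> x = TM k \<and> k < m \<Longrightarrow> ob S x \<in> cobj B"
  by (auto simp: ob_def)
lemma obTN[simp]: "k < n \<Longrightarrow> ob S (TN k) \<in> cobj B" by (auto simp: ob_def)
lemma obTM[simp]: "k < m \<Longrightarrow> ob S (TM k) \<in> cobj B" by (auto simp: ob_def)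
lemma X_obj: "set (X S) \<subseteq> cobj B" by (auto simp: X_def)
lemma Y_obj: "set (Y S) \<subseteq> cobj B" by (auto simp: Y_def)

lemma eF_carr: "set (eF S) \<subseteq> carr B" by (auto simp: eF_def)
lemma gG_carr: "set (gG S) \<subseteq> carr B" by (auto simp: gG_def)
lemma hH_carr: "set (hH S) \<subseteq> carr B" by (auto simp: hH_def)

lemma eF_src: "msrc B \<alpha> (eF S) = SrcF"
  by (rule nth_equalityI) (auto simp: msrc_def eF_def SrcF_def)
lemma eF_tgt: "mtgt B \<alpha> (eF S) = reidx \<sigma> (length \<alpha>) (X S)"
  by (rule nth_equalityI) (auto simp: mtgt_def eF_def reidx_def ob_def)
lemma gG_src: "UC S \<Longrightarrow> msrc B \<beta> (gG S) = reidx \<tau> (length \<beta>) (X S)"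
  by (rule nth_equalityI) (auto simp: msrc_def gG_def reidx_def ob_def UC_def)
lemma gG_tgt: "UC S \<Longrightarrow> mtgt B \<beta> (gG S) = reidx \<eta> (length \<beta>) (Y S)"
  by (rule nth_equalityI) (auto simp: mtgt_def gG_def reidx_def ob_def UC_def comm)
lemma hH_src: "msrc B \<gamma> (hH S) = reidx \<theta> (length \<gamma>) (Y S)"
  by (rule nth_equalityI) (auto simp: msrc_def hH_def reidx_def ob_def)
lemma hH_tgt: "mtgt B \<gamma> (hH S) = TgtH"
  by (rule nth_equalityI) (auto simp: mtgt_def hH_def TgtH_def)

end

context ctx begin

lemma phi_hom: "\<phi> (X S) \<in> hom C (Fo (reidx \<sigma> (length \<alpha>) (X S))) (Go (reidx \<tau> (length \<beta>) (X S)))"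
  using trP X_obj by (simp add: is_transformation_def)
lemma psi_hom: "\<psi> (Y S) \<in> hom C (Go (reidx \<eta> (length \<beta>) (Y S))) (Ho (reidx \<theta> (length \<gamma>) (Y S)))"
  using trQ Y_obj by (simp add: is_transformation_def)

lemma step_TN:
  assumes k: "k < n" "\<zeta> k = i" and nS: "TN k \<notin> S" and uc: "UC S" and uc': "UC (insert (TN k) S)"
    and succ: "\<forall>j<length \<beta>. \<tau> j = k \<and> \<beta>!j \<longrightarrow> TM (\<eta> j) \<in> S"
  shows "E S = E (insert (TN k) S)"
proof -
  define S' where "S' = insert (TN k) S"
  define Xs where "Xs = X S"
  have XS': "X S' = Xs[k := a1]" unfolding S'_def Xs_def
    by (rule nth_equalityI) (auto simp: k ob_def nth_list_update)
  have Xk: "Xs[k := a0] = Xs" unfolding Xs_def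
    by (rule nth_equalityI) (auto simp: k nS ob_def nth_list_update)
  have YS': "Y S' = Y S" unfolding S'_def by (rule nth_equalityI) (auto simp: ob_def)
  have hS': "hH S' = hH S" unfolding S'_def by (rule nth_equalityI) (auto simp: hH_def)
  have Xs_len[simp]: "length Xs = n" and Xs_obj: "set Xs \<subseteq> cobj B" using X_obj by (auto simp: Xs_def)
  define dG1 where "dG1 = msubst B \<beta> \<tau> Xs k (cid B a0) f"
  define dG2 where "dG2 = msubst B \<beta> \<tau> Xs k f (cid B a1)"
  define dF1 where "dF1 = msubst B \<alpha> \<sigma> Xs k f (cid B a0)"
  define dF2 where "dF2 = msubst B \<alpha> \<sigma> Xs k (cid B a1) f"
  define gR where "gR = map (\<lambda>j. if \<tau> j = k then (if \<beta>!j then cid B a1 else cid B a0) else gG S ! j) [0..<length \<beta>]"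
  define eR where "eR = map (\<lambda>j. if \<sigma> j = k then (if \<alpha>!j then cid B a0 else cid B a1) else eF S ! j) [0..<length \<alpha>]"
  have nopred: "\<And>j. j < length \<beta> \<Longrightarrow> \<tau> j = k \<Longrightarrow> \<not> \<beta>!j \<Longrightarrow> TM (\<eta> j) \<notin> S"
  proof
    fix j assume j: "j < length \<beta>" "\<tau> j = k" "\<not> \<beta>!j" "TM (\<eta> j) \<in> S"
    have "TN (\<tau> j) \<in> S" using UC_contraD[OF uc j(1) _ j(3) j(4)] j(2) k by simp
    then show False using j(2) nS by simp
  qed
  have Xs_nth: "\<And>j. j < n \<Longrightarrow> Xs ! j = ob S (TN j)" by (simp add: Xs_def)
  have c1: "set dG1 \<subseteq> carr B" "set dG2 \<subseteq> carr B" "set dF1 \<subseteq> carr B" "set dF2 \<subseteq> carr B"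
    "set gR \<subseteq> carr B" "set eR \<subseteq> carr B"
    by (auto simp: dG1_def dG2_def dF1_def dF2_def gR_def eR_def msubst_def Xs_nth k gG_def eF_def)
  have l1: "length dG1 = length \<beta>" "length dG2 = length \<beta>" "length dF1 = length \<alpha>" "length dF2 = length \<alpha>"
    "length gR = length \<beta>" "length eR = length \<alpha>"
    by (auto simp: dG1_def dG2_def dF1_def dF2_def gR_def eR_def msubst_def)
  have t1: "msrc B \<beta> dG1 = reidx \<tau> (length \<beta>) Xs"
    by (rule nth_equalityI) (auto simp: dG1_def msubst_def msrc_def reidx_def Xs_nth k ob_def nS)
  have t2: "msrc B \<beta> dG2 = reidx \<tau> (length \<beta>) (X S')"
    by (rule nth_equalityI) (auto simp: dG2_def msubst_def msrc_def reidx_def Xs_nth XS' k ob_def nS nth_list_update)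
  have t3: "mtgt B \<beta> dG1 = msrc B \<beta> gR" by (rule nth_equalityI) (auto simp: dG1_def gR_def msubst_def msrc_def mtgt_def Xs_nth k gG_def ob_def nS uc UC_contra)
  have t4: "mtgt B \<beta> dG2 = msrc B \<beta> gR" by (rule nth_equalityI) (auto simp: dG2_def gR_def msubst_def msrc_def mtgt_def Xs_nth k gG_def ob_def nS uc UC_contra)
  have t5: "mtgt B \<beta> gR = reidx \<eta> (length \<beta>) (Y S)"
  proof (rule nth_equalityI)
    fix j assume j: "j < length (mtgt B \<beta> gR)"
    then have j': "j < length \<beta>" by (simp add: mtgt_def)
    show "mtgt B \<beta> gR ! j = reidx \<eta> (length \<beta>) (Y S) ! j"
    proof (cases "\<tau> j = k")
      case True
      then show ?thesis using j' nopred[of j] succ k nS comm[of j]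
        by (auto simp: gR_def mtgt_def reidx_def ob_def)
    next
      case False
      have "mtgt B \<beta> (gG S) ! j = reidx \<eta> (length \<beta>) (Y S) ! j" using gG_tgt[OF uc] by simp
      then have "(if \<beta>!j then ccod B (gG S ! j) else cdom B (gG S ! j)) = reidx \<eta> (length \<beta>) (Y S) ! j"
        using j' by (simp add: mtgt_nth)
      then show ?thesis using j' False
        by (cases "\<beta>!j") (simp_all add: gR_def mtgt_nth)
    qed
  qed (simp add: mtgt_def reidx_def)
  have t6: "mtgt B \<alpha> dF1 = reidx \<sigma> (length \<alpha>) Xs" by (rule nth_equalityI) (auto simp: dF1_def msubst_def mtgt_def reidx_def Xs_nth k ob_def nS)
  have t7: "mtgt B \<alpha> dF2 = reidx \<sigma> (length \<alpha>) (X S')" by (rule nth_equalityI) (auto simp: dF2_def msubst_def mtgt_def reidx_def Xs_nth XS' k ob_def nS nth_list_update Xs_len)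
  have t8: "msrc B \<alpha> dF1 = mtgt B \<alpha> eR" by (rule nth_equalityI) (auto simp: dF1_def eR_def msubst_def msrc_def mtgt_def Xs_nth k eF_def ob_def nS)
  have t9: "msrc B \<alpha> dF2 = mtgt B \<alpha> eR" by (rule nth_equalityI) (auto simp: dF2_def eR_def msubst_def msrc_def mtgt_def Xs_nth k eF_def ob_def nS)
  have t10: "msrc B \<alpha> eR = SrcF" by (rule nth_equalityI) (auto simp: eR_def msrc_def SrcF_def k eF_def)
  have m1: "gG S = mcomp B \<beta> gR dG1"
  proof (rule nth_equalityI)
    fix j assume j: "j < length (gG S)"
    show "gG S ! j = mcomp B \<beta> gR dG1 ! j"
    proof (cases "\<tau> j = k")
      case True
      then show ?thesis using j nopred[of j] succ k nS
        by (auto simp: dG1_def gR_def msubst_def mcomp_def gG_def pm_def)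
    next
      case False
      then show ?thesis using j UC_contraD[OF uc, of j]
        by (auto simp: dG1_def gR_def msubst_def mcomp_def Xs_nth k gG_def ob_def nS pm_def)
    qed
  qed (simp add: l1 mcomp_def)
  have m2: "gG S' = mcomp B \<beta> gR dG2"
  proof (rule nth_equalityI)
    fix j assume j: "j < length (gG S')"
    show "gG S' ! j = mcomp B \<beta> gR dG2 ! j"
    proof (cases "\<tau> j = k")
      case True
      then show ?thesis using j nopred[of j] succ k nS
        by (auto simp: S'_def dG2_def gR_def msubst_def mcomp_def gG_def pm_def)
    next
      case False
      then show ?thesis using j UC_contraD[OF uc, of j]
        by (auto simp: S'_def dG2_def gR_def msubst_def mcomp_def Xs_nth k gG_def ob_def nS pm_def)
    qed
  qed (simp add: l1 mcomp_def)
  have m3: "eF S = mcomp B \<alpha> dF1 eR" by (rule nth_equalityI) (auto simp: dF1_def eR_def msubst_def mcomp_def Xs_nth k eF_def ob_def nS pm_def)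
  have m4: "eF S' = mcomp B \<alpha> dF2 eR" by (rule nth_equalityI) (auto simp: S'_def dF2_def eR_def msubst_def mcomp_def Xs_nth k eF_def ob_def nS pm_def)
  have eG1: "Gm (gG S) = ccomp C (Gm gR) (Gm dG1)" unfolding m1
    by (rule fun_comp[OF funG]) (use l1 c1 t3 in auto)
  have eG2: "Gm (gG S') = ccomp C (Gm gR) (Gm dG2)" unfolding m2
    by (rule fun_comp[OF funG]) (use l1 c1 t4 in auto)
  have eF1: "Fm (eF S) = ccomp C (Fm dF1) (Fm eR)" unfolding m3
    by (rule fun_comp[OF funF]) (use l1 c1 t8 in auto)
  have eF2: "Fm (eF S') = ccomp C (Fm dF2) (Fm eR)" unfolding m4
    by (rule fun_comp[OF funF]) (use l1 c1 t9 in auto)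
  have hGr: "Gm gR \<in> hom C (Go (msrc B \<beta> gR)) (Go (reidx \<eta> (length \<beta>) (Y S)))"
    by (rule fun_hom[OF funG]) (use l1 c1 t5 in auto)
  have hG1: "Gm dG1 \<in> hom C (Go (reidx \<tau> (length \<beta>) Xs)) (Go (msrc B \<beta> gR))"
    by (rule fun_hom[OF funG]) (use l1 c1 t1 t3 in auto)
  have hG2: "Gm dG2 \<in> hom C (Go (reidx \<tau> (length \<beta>) (X S'))) (Go (msrc B \<beta> gR))"
    by (rule fun_hom[OF funG]) (use l1 c1 t2 t4 in auto)
  have hF1: "Fm dF1 \<in> hom C (Fo (mtgt B \<alpha> eR)) (Fo (reidx \<sigma> (length \<alpha>) Xs))"
    by (rule fun_hom[OF funF]) (use l1 c1 t6 t8 in auto)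
  have hF2: "Fm dF2 \<in> hom C (Fo (mtgt B \<alpha> eR)) (Fo (reidx \<sigma> (length \<alpha>) (X S')))"
    by (rule fun_hom[OF funF]) (use l1 c1 t7 t9 in auto)
  have hFr: "Fm eR \<in> hom C (Fo SrcF) (Fo (mtgt B \<alpha> eR))"
    by (rule fun_hom[OF funF]) (use l1 c1 t10 in auto)
  have hP1: "\<phi> Xs \<in> hom C (Fo (reidx \<sigma> (length \<alpha>) Xs)) (Go (reidx \<tau> (length \<beta>) Xs))"
    unfolding Xs_def by (rule phi_hom)
  have hP2: "\<phi> (X S') \<in> hom C (Fo (reidx \<sigma> (length \<alpha>) (X S'))) (Go (reidx \<tau> (length \<beta>) (X S')))"
    by (rule phi_hom)
  have din: "ccomp C (Gm dG1) (ccomp C (\<phi> Xs) (Fm dF1)) = ccomp C (Gm dG2) (ccomp C (\<phi> (X S')) (Fm dF2))"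
  proof -
    have "dinatural_in B C \<alpha> \<beta> \<sigma> \<tau> n Fm Gm \<phi> k" using dinP k by simp
    then have "ccomp C (Gm dG1) (ccomp C (\<phi> (Xs[k := a0])) (Fm dF1)) =
               ccomp C (Gm dG2) (ccomp C (\<phi> (Xs[k := a1])) (Fm dF2))"
      unfolding dinatural_in_def dG1_def dG2_def dF1_def dF2_def using Xs_len Xs_obj f_carr
      by (metis (no_types, lifting))
    then show ?thesis using Xk XS' by simp
  qed
  have "E S = ccomp C (Hm (hH S)) (ccomp C (\<psi> (Y S)) (ccomp C (ccomp C (Gm gR) (Gm dG1)) (ccomp C (\<phi> Xs) (ccomp C (Fm dF1) (Fm eR)))))"
    unfolding E_def eG1 eF1 Xs_def ..
  also have "\<dots> = ccomp C (Hm (hH S)) (ccomp C (\<psi> (Y S)) (ccomp C (Gm gR) (ccomp C (ccomp C (Gm dG1) (ccomp C (\<phi> Xs) (Fm dF1))) (Fm eR))))"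
    using assoc5[OF catC hGr hG1 hP1 hF1 hFr] by simp
  also have "\<dots> = ccomp C (Hm (hH S)) (ccomp C (\<psi> (Y S)) (ccomp C (Gm gR) (ccomp C (ccomp C (Gm dG2) (ccomp C (\<phi> (X S')) (Fm dF2))) (Fm eR))))"
    using din by simp
  also have "\<dots> = ccomp C (Hm (hH S)) (ccomp C (\<psi> (Y S)) (ccomp C (ccomp C (Gm gR) (Gm dG2)) (ccomp C (\<phi> (X S')) (ccomp C (Fm dF2) (Fm eR)))))"
    using assoc5[OF catC hGr hG2 hP2 hF2 hFr] by simp
  also have "\<dots> = E S'"
    unfolding E_def eG2 eF2 YS' hS' ..
  finally show ?thesis unfolding S'_def .
qed

end

context ctx begin

lemma step_TM:
  assumes k: "k < m" "\<xi> k = i" and nS: "TM k \<notin> S" and uc: "UC S" and uc': "UC (insert (TM k) S)"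
    and succ: "\<forall>j<length \<beta>. \<eta> j = k \<and> \<not> \<beta>!j \<longrightarrow> TN (\<tau> j) \<in> S"
  shows "E S = E (insert (TM k) S)"
proof -
  define S' where "S' = insert (TM k) S"
  define Ys where "Ys = Y S"
  have YS': "Y S' = Ys[k := a1]" unfolding S'_def Ys_def
    by (rule nth_equalityI) (auto simp: k ob_def nth_list_update)
  have Yk: "Ys[k := a0] = Ys" unfolding Ys_def
    by (rule nth_equalityI) (auto simp: k nS ob_def nth_list_update)
  have XS': "X S' = X S" unfolding S'_def by (rule nth_equalityI) (auto simp: ob_def)
  have eS': "eF S' = eF S" unfolding S'_def by (rule nth_equalityI) (auto simp: eF_def)
  have Ys_len[simp]: "length Ys = m" and Ys_obj: "set Ys \<subseteq> cobj B" using Y_obj by (auto simp: Ys_def)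
  have Ys_nth: "\<And>j. j < m \<Longrightarrow> Ys ! j = ob S (TM j)" by (simp add: Ys_def)
  have nopred: "\<And>j. j < length \<beta> \<Longrightarrow> \<eta> j = k \<Longrightarrow> \<beta>!j \<Longrightarrow> TN (\<tau> j) \<notin> S"
  proof
    fix j assume j: "j < length \<beta>" "\<eta> j = k" "\<beta>!j" "TN (\<tau> j) \<in> S"
    have "\<zeta> (\<tau> j) = i" using comm[OF j(1)] j(2) k by simp
    then have "TM (\<eta> j) \<in> S" using UC_coD[OF uc j(1) _ j(3) j(4)] by simp
    then show False using j(2) nS by simp
  qed
  have zk: "\<And>j. j < length \<beta> \<Longrightarrow> \<eta> j = k \<Longrightarrow> \<zeta> (\<tau> j) = i" using comm k by (metis)
  define dH1 where "dH1 = msubst B \<gamma> \<theta> Ys k (cid B a0) f"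
  define dH2 where "dH2 = msubst B \<gamma> \<theta> Ys k f (cid B a1)"
  define dG1 where "dG1 = msubst B \<beta> \<eta> Ys k f (cid B a0)"
  define dG2 where "dG2 = msubst B \<beta> \<eta> Ys k (cid B a1) f"
  define hR where "hR = map (\<lambda>j. if \<theta> j = k then (if \<gamma>!j then cid B a1 else cid B a0) else hH S ! j) [0..<length \<gamma>]"
  define gR where "gR = map (\<lambda>j. if \<eta> j = k then (if \<beta>!j then cid B a0 else cid B a1) else gG S ! j) [0..<length \<beta>]"
  have c1: "set dH1 \<subseteq> carr B" "set dH2 \<subseteq> carr B" "set dG1 \<subseteq> carr B" "set dG2 \<subseteq> carr B"
    "set hR \<subseteq> carr B" "set gR \<subseteq> carr B"
    by (auto simp: dH1_def dH2_def dG1_def dG2_def hR_def gR_def msubst_def Ys_nth k gG_def hH_def)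
  have l1: "length dH1 = length \<gamma>" "length dH2 = length \<gamma>" "length dG1 = length \<beta>" "length dG2 = length \<beta>"
    "length hR = length \<gamma>" "length gR = length \<beta>"
    by (auto simp: dH1_def dH2_def dG1_def dG2_def hR_def gR_def msubst_def)
  have t1: "msrc B \<gamma> dH1 = reidx \<theta> (length \<gamma>) Ys"
    by (rule nth_equalityI) (auto simp: dH1_def msubst_def msrc_def reidx_def Ys_nth k ob_def nS)
  have t2: "msrc B \<gamma> dH2 = reidx \<theta> (length \<gamma>) (Y S')"
    by (rule nth_equalityI) (auto simp: dH2_def msubst_def msrc_def reidx_def YS' k nth_list_update Ys_nth)
  have t3: "mtgt B \<gamma> dH1 = msrc B \<gamma> hR"
    by (rule nth_equalityI) (auto simp: dH1_def hR_def msubst_def msrc_def mtgt_def Ys_nth k hH_def ob_def nS)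
  have t4: "mtgt B \<gamma> dH2 = msrc B \<gamma> hR"
    by (rule nth_equalityI) (auto simp: dH2_def hR_def msubst_def msrc_def mtgt_def Ys_nth k hH_def ob_def nS)
  have t5: "mtgt B \<gamma> hR = TgtH"
    by (rule nth_equalityI) (auto simp: hR_def mtgt_def TgtH_def hH_def k)
  have t6: "mtgt B \<beta> dG1 = reidx \<eta> (length \<beta>) Ys"
    by (rule nth_equalityI) (auto simp: dG1_def msubst_def mtgt_def reidx_def Ys_nth k ob_def nS)
  have t7: "mtgt B \<beta> dG2 = reidx \<eta> (length \<beta>) (Y S')"
    by (rule nth_equalityI) (auto simp: dG2_def msubst_def mtgt_def reidx_def YS' k nth_list_update Ys_nth)
  have t8: "msrc B \<beta> dG1 = mtgt B \<beta> gR"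
  proof (rule nth_equalityI)
    fix j assume j: "j < length (msrc B \<beta> dG1)"
    then have j': "j < length \<beta>" by simp
    show "msrc B \<beta> dG1 ! j = mtgt B \<beta> gR ! j"
    proof (cases "\<eta> j = k")
      case True
      then show ?thesis using j' by (auto simp: dG1_def gR_def msubst_def msrc_nth mtgt_nth)
    next
      case False
      have "mtgt B \<beta> gR ! j = mtgt B \<beta> (gG S) ! j" using j' False by (intro mtgt_same) (simp_all add: gR_def)
      also have "\<dots> = Ys ! (\<eta> j)" using gG_tgt[OF uc] j' by (simp add: Ys_def reidx_def)
      finally show ?thesis using j' False by (simp add: dG1_def msubst_def msrc_nth Ys_nth)
    qed
  qed simp
  have t9: "msrc B \<beta> dG2 = mtgt B \<beta> gR"
  proof (rule nth_equalityI)
    fix j assume j: "j < length (msrc B \<beta> dG2)"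
    then have j': "j < length \<beta>" by simp
    show "msrc B \<beta> dG2 ! j = mtgt B \<beta> gR ! j"
    proof (cases "\<eta> j = k")
      case True
      then show ?thesis using j' by (auto simp: dG2_def gR_def msubst_def msrc_nth mtgt_nth)
    next
      case False
      have "mtgt B \<beta> gR ! j = mtgt B \<beta> (gG S) ! j" using j' False by (intro mtgt_same) (simp_all add: gR_def)
      also have "\<dots> = Ys ! (\<eta> j)" using gG_tgt[OF uc] j' by (simp add: Ys_def reidx_def)
      finally show ?thesis using j' False by (simp add: dG2_def msubst_def msrc_nth Ys_nth)
    qed
  qed simp
  have t10: "msrc B \<beta> gR = reidx \<tau> (length \<beta>) (X S)"
  proof (rule nth_equalityI)
    fix j assume j: "j < length (msrc B \<beta> gR)"
    then have j': "j < length \<beta>" by simp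
    show "msrc B \<beta> gR ! j = reidx \<tau> (length \<beta>) (X S) ! j"
    proof (cases "\<eta> j = k")
      case True
      then show ?thesis using j' nopred[of j] succ zk[of j]
        by (auto simp: gR_def msrc_nth reidx_def ob_def)
    next
      case False
      have "msrc B \<beta> gR ! j = msrc B \<beta> (gG S) ! j" using j' False by (intro msrc_same) (simp_all add: gR_def)
      also have "\<dots> = reidx \<tau> (length \<beta>) (X S) ! j" using gG_src[OF uc] by simp
      finally show ?thesis .
    qed
  qed (simp add: reidx_def)
  have m1: "hH S = mcomp B \<gamma> hR dH1"
    by (rule nth_equalityI) (auto simp: dH1_def hR_def msubst_def mcomp_def Ys_nth k hH_def ob_def nS pm_def)
  have m2: "hH S' = mcomp B \<gamma> hR dH2"
    by (rule nth_equalityI) (auto simp: S'_def dH2_def hR_def msubst_def mcomp_def Ys_nth k hH_def ob_def nS pm_def)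
  have m3: "gG S = mcomp B \<beta> dG1 gR"
  proof (rule nth_equalityI)
    fix j assume j: "j < length (gG S)"
    show "gG S ! j = mcomp B \<beta> dG1 gR ! j"
    proof (cases "\<eta> j = k")
      case True
      then show ?thesis using j nopred[of j] succ k nS zk[of j]
        by (auto simp: dG1_def gR_def msubst_def mcomp_def gG_def pm_def)
    next
      case False
      then show ?thesis using j UC_contraD[OF uc, of j] UC_coD[OF uc, of j] comm[of j]
        by (auto simp: dG1_def gR_def msubst_def mcomp_def Ys_nth k gG_def ob_def nS pm_def)
    qed
  qed (simp add: l1 mcomp_def)
  have m4: "gG S' = mcomp B \<beta> dG2 gR"
  proof (rule nth_equalityI)
    fix j assume j: "j < length (gG S')"
    show "gG S' ! j = mcomp B \<beta> dG2 gR ! j"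
    proof (cases "\<eta> j = k")
      case True
      then show ?thesis using j nopred[of j] succ k nS zk[of j]
        by (auto simp: S'_def dG2_def gR_def msubst_def mcomp_def gG_def pm_def)
    next
      case False
      then show ?thesis using j UC_contraD[OF uc, of j] UC_coD[OF uc, of j] comm[of j]
        by (auto simp: S'_def dG2_def gR_def msubst_def mcomp_def Ys_nth k gG_def ob_def nS pm_def)
    qed
  qed (simp add: l1 mcomp_def)
  have eH1: "Hm (hH S) = ccomp C (Hm hR) (Hm dH1)" unfolding m1
    by (rule fun_comp[OF funH]) (use l1 c1 t3 in auto)
  have eH2: "Hm (hH S') = ccomp C (Hm hR) (Hm dH2)" unfolding m2
    by (rule fun_comp[OF funH]) (use l1 c1 t4 in auto)
  have eG1: "Gm (gG S) = ccomp C (Gm dG1) (Gm gR)" unfolding m3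
    by (rule fun_comp[OF funG]) (use l1 c1 t8 in auto)
  have eG2: "Gm (gG S') = ccomp C (Gm dG2) (Gm gR)" unfolding m4
    by (rule fun_comp[OF funG]) (use l1 c1 t9 in auto)
  have hHr: "Hm hR \<in> hom C (Ho (msrc B \<gamma> hR)) (Ho TgtH)"
    by (rule fun_hom[OF funH]) (use l1 c1 t5 in auto)
  have hH1: "Hm dH1 \<in> hom C (Ho (reidx \<theta> (length \<gamma>) Ys)) (Ho (msrc B \<gamma> hR))"
    by (rule fun_hom[OF funH]) (use l1 c1 t1 t3 in auto)
  have hH2: "Hm dH2 \<in> hom C (Ho (reidx \<theta> (length \<gamma>) (Y S'))) (Ho (msrc B \<gamma> hR))"
    by (rule fun_hom[OF funH]) (use l1 c1 t2 t4 in auto)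
  have hG1: "Gm dG1 \<in> hom C (Go (mtgt B \<beta> gR)) (Go (reidx \<eta> (length \<beta>) Ys))"
    by (rule fun_hom[OF funG]) (use l1 c1 t6 t8 in auto)
  have hG2: "Gm dG2 \<in> hom C (Go (mtgt B \<beta> gR)) (Go (reidx \<eta> (length \<beta>) (Y S')))"
    by (rule fun_hom[OF funG]) (use l1 c1 t7 t9 in auto)
  have hGr: "Gm gR \<in> hom C (Go (reidx \<tau> (length \<beta>) (X S))) (Go (mtgt B \<beta> gR))"
    by (rule fun_hom[OF funG]) (use l1 c1 t10 in auto)
  have hQ1: "\<psi> Ys \<in> hom C (Go (reidx \<eta> (length \<beta>) Ys)) (Ho (reidx \<theta> (length \<gamma>) Ys))"
    unfolding Ys_def by (rule psi_hom)
  have hQ2: "\<psi> (Y S') \<in> hom C (Go (reidx \<eta> (length \<beta>) (Y S'))) (Ho (reidx \<theta> (length \<gamma>) (Y S')))"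
    by (rule psi_hom)
  define R where "R = ccomp C (\<phi> (X S)) (Fm (eF S))"
  have hR': "R \<in> hom C (Fo SrcF) (Go (reidx \<tau> (length \<beta>) (X S)))"
    unfolding R_def
    by (rule cat_comp[OF catC _ phi_hom]) (rule fun_hom[OF funF], simp_all add: eF_carr eF_src eF_tgt)
  have hGR: "ccomp C (Gm gR) R \<in> hom C (Fo SrcF) (Go (mtgt B \<beta> gR))"
    by (rule cat_comp[OF catC hR' hGr])
  have din: "ccomp C (Hm dH1) (ccomp C (\<psi> Ys) (Gm dG1)) = ccomp C (Hm dH2) (ccomp C (\<psi> (Y S')) (Gm dG2))"
  proof -
    have "dinatural_in B C \<beta> \<gamma> \<eta> \<theta> m Gm Hm \<psi> k" using dinQ k by simp
    then have "ccomp C (Hm dH1) (ccomp C (\<psi> (Ys[k := a0])) (Gm dG1)) =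
               ccomp C (Hm dH2) (ccomp C (\<psi> (Ys[k := a1])) (Gm dG2))"
      unfolding dinatural_in_def dH1_def dH2_def dG1_def dG2_def using Ys_len Ys_obj f_carr
      by (metis (no_types, lifting))
    then show ?thesis using Yk YS' by simp
  qed
  have "E S = ccomp C (ccomp C (Hm hR) (Hm dH1)) (ccomp C (\<psi> Ys) (ccomp C (ccomp C (Gm dG1) (Gm gR)) R))"
    unfolding E_def eH1 eG1 Ys_def R_def ..
  also have "\<dots> = ccomp C (ccomp C (Hm hR) (Hm dH1)) (ccomp C (\<psi> Ys) (ccomp C (Gm dG1) (ccomp C (Gm gR) R)))"
    using cat_assoc[OF catC hR' hGr hG1] by simp
  also have "\<dots> = ccomp C (Hm hR) (ccomp C (ccomp C (Hm dH1) (ccomp C (\<psi> Ys) (Gm dG1))) (ccomp C (Gm gR) R))"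
    using assoc5[OF catC hHr hH1 hQ1 hG1 hGR] by simp
  also have "\<dots> = ccomp C (Hm hR) (ccomp C (ccomp C (Hm dH2) (ccomp C (\<psi> (Y S')) (Gm dG2))) (ccomp C (Gm gR) R))"
    using din by simp
  also have "\<dots> = ccomp C (ccomp C (Hm hR) (Hm dH2)) (ccomp C (\<psi> (Y S')) (ccomp C (Gm dG2) (ccomp C (Gm gR) R)))"
    using assoc5[OF catC hHr hH2 hQ2 hG2 hGR] by simp
  also have "\<dots> = ccomp C (ccomp C (Hm hR) (Hm dH2)) (ccomp C (\<psi> (Y S')) (ccomp C (ccomp C (Gm dG2) (Gm gR)) R))"
    using cat_assoc[OF catC hR' hGr hG2] by simp
  also have "\<dots> = E S'"
    unfolding E_def eH2 eG2 XS' eS' R_def ..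
  finally show ?thesis unfolding S'_def .
qed

end

context ctx begin

definition Kset :: "node set" where
  "Kset = {TN k | k. k < n \<and> \<zeta> k = i} \<union> {TM k | k. k < m \<and> \<xi> k = i}"

lemma Kset_fin: "finite Kset"
proof -
  have "Kset \<subseteq> TN ` {..<n} \<union> TM ` {..<m}" by (auto simp: Kset_def)
  then show ?thesis by (rule finite_subset) simp
qed

lemma E_simple:
  assumes uc: "UC S" and g: "gG S = map (cid B) (reidx \<tau> (length \<beta>) (X S))"
    and xy: "reidx \<tau> (length \<beta>) (X S) = reidx \<eta> (length \<beta>) (Y S)"
  shows "E S = ccomp C (Hm (hH S)) (ccomp C (ccomp C (\<psi> (Y S)) (\<phi> (X S))) (Fm (eF S)))"
proof -
  have hF: "Fm (eF S) \<in> hom C (Fo SrcF) (Fo (reidx \<sigma> (length \<alpha>) (X S)))"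
    by (rule fun_hom[OF funF]) (simp_all add: eF_carr eF_src eF_tgt)
  have hPF: "ccomp C (\<phi> (X S)) (Fm (eF S)) \<in> hom C (Fo SrcF) (Go (reidx \<tau> (length \<beta>) (X S)))"
    by (rule cat_comp[OF catC hF phi_hom])
  have gid: "Gm (gG S) = cid C (Go (reidx \<tau> (length \<beta>) (X S)))"
    unfolding g by (rule fun_id[OF funG]) (auto simp: reidx_def)
  have hQ: "\<psi> (Y S) \<in> hom C (Go (reidx \<tau> (length \<beta>) (X S))) (Ho (reidx \<theta> (length \<gamma>) (Y S)))"
    using psi_hom xy by simp
  show ?thesis unfolding E_def gid
    using cat_idl[OF catC hPF] cat_assoc[OF catC hF phi_hom hQ] by simp
qed

lemma E_start: "ccomp C (Hm (msubst B \<gamma> (\<xi> \<circ> \<theta>) As i (cid B a0) f))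
      (ccomp C (vcomp C n m \<zeta> \<xi> \<phi> \<psi> (As[i := a0])) (Fm (msubst B \<alpha> (\<zeta> \<circ> \<sigma>) As i f (cid B a0)))) = E {}"
proof -
  have uc: "UC {}" by (simp add: UC_def)
  have g: "gG {} = map (cid B) (reidx \<tau> (length \<beta>) (X {}))"
    by (rule nth_equalityI) (auto simp: gG_def reidx_def ob_def pm_def)
  have xy: "reidx \<tau> (length \<beta>) (X {}) = reidx \<eta> (length \<beta>) (Y {})"
    by (rule nth_equalityI) (auto simp: reidx_def ob_def comm)
  have h: "hH {} = msubst B \<gamma> (\<xi> \<circ> \<theta>) As i (cid B a0) f"
    by (rule nth_equalityI) (auto simp: hH_def msubst_def pm_def)
  have e: "eF {} = msubst B \<alpha> (\<zeta> \<circ> \<sigma>) As i f (cid B a0)"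
    by (rule nth_equalityI) (auto simp: eF_def msubst_def pm_def)
  have x: "reidx \<zeta> n (As[i := a0]) = X {}"
    by (rule nth_equalityI) (auto simp: reidx_def ob_def nth_list_update As_len)
  have y: "reidx \<xi> m (As[i := a0]) = Y {}"
    by (rule nth_equalityI) (auto simp: reidx_def ob_def nth_list_update As_len)
  show ?thesis unfolding E_simple[OF uc g xy] h e vcomp_def x y ..
qed

lemma E_end: "ccomp C (Hm (msubst B \<gamma> (\<xi> \<circ> \<theta>) As i f (cid B a1)))
      (ccomp C (vcomp C n m \<zeta> \<xi> \<phi> \<psi> (As[i := a1])) (Fm (msubst B \<alpha> (\<zeta> \<circ> \<sigma>) As i (cid B a1) f))) = E Kset"
proof -
  have uc: "UC Kset" by (auto simp: UC_def Kset_def comm)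
  have g: "gG Kset = map (cid B) (reidx \<tau> (length \<beta>) (X Kset))"
    by (rule nth_equalityI) (auto simp: gG_def reidx_def ob_def pm_def Kset_def comm)
  have xy: "reidx \<tau> (length \<beta>) (X Kset) = reidx \<eta> (length \<beta>) (Y Kset)"
    by (rule nth_equalityI) (auto simp: reidx_def ob_def comm Kset_def)
  have h: "hH Kset = msubst B \<gamma> (\<xi> \<circ> \<theta>) As i f (cid B a1)"
    by (rule nth_equalityI) (auto simp: hH_def msubst_def pm_def Kset_def)
  have e: "eF Kset = msubst B \<alpha> (\<zeta> \<circ> \<sigma>) As i (cid B a1) f"
    by (rule nth_equalityI) (auto simp: eF_def msubst_def pm_def Kset_def)
  have x: "reidx \<zeta> n (As[i := a1]) = X Kset"
    by (rule nth_equalityI) (auto simp: reidx_def ob_def nth_list_update As_len Kset_def)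
  have y: "reidx \<xi> m (As[i := a1]) = Y Kset"
    by (rule nth_equalityI) (auto simp: reidx_def ob_def nth_list_update As_len Kset_def)
  show ?thesis unfolding E_simple[OF uc g xy] h e vcomp_def x y ..
qed

end


lemma comp_graph_finite: "finite (comp_graph \<alpha> \<beta> \<gamma> \<sigma> \<tau> \<eta> \<theta>)"
  unfolding comp_graph_def by (auto intro!: finite_image_set)

context ctx begin

lemma iterate:
  assumes acyc: "acyclic (comp_graph \<alpha> \<beta> \<gamma> \<sigma> \<tau> \<eta> \<theta>)"
  shows "S \<subseteq> Kset \<Longrightarrow> UC S \<Longrightarrow> E S = E Kset"
proof (induction "card (Kset - S)" arbitrary: S rule: less_induct)
  case less
  let ?r = "comp_graph \<alpha> \<beta> \<gamma> \<sigma> \<tau> \<eta> \<theta>"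
  show ?case
  proof (cases "S = Kset")
    case True then show ?thesis by simp
  next
    case False
    then obtain x where x: "x \<in> Kset - S" using less.prems by blast
    have wf: "wf ((?r\<^sup>+)\<inverse>)"
      using wf_trancl[OF finite_acyclic_wf_converse[OF comp_graph_finite acyc]] by (simp add: trancl_converse)
    obtain z where z: "z \<in> Kset - S" and zmin: "\<And>y. (z, y) \<in> ?r\<^sup>+ \<Longrightarrow> y \<notin> Kset - S"
      using wf[unfolded wf_eq_minimal, rule_format, OF x] by blast
    have fin: "finite (Kset - S)" using Kset_fin by simp
    have lt: "card (Kset - insert z S) < card (Kset - S)"
      using z fin by (metis Diff_insert card_Diff1_less)
    have sub: "insert z S \<subseteq> Kset" using z less.prems by auto
    show ?thesis
    proof -
      { fix k assume zk: "z = TN k"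
        then have k: "k < n" "\<zeta> k = i" using z by (auto simp: Kset_def)
        have succ: "\<forall>j<length \<beta>. \<tau> j = k \<and> \<beta>!j \<longrightarrow> TM (\<eta> j) \<in> S"
        proof (intro allI impI)
          fix j assume j: "j < length \<beta>" "\<tau> j = k \<and> \<beta>!j"
          have "(z, PB j) \<in> ?r" using zk j by (auto simp: comp_graph_def)
          moreover have "(PB j, TM (\<eta> j)) \<in> ?r" using j by (auto simp: comp_graph_def)
          ultimately have "(z, TM (\<eta> j)) \<in> ?r\<^sup>+" by auto
          then have "TM (\<eta> j) \<notin> Kset - S" by (rule zmin)
          moreover have "TM (\<eta> j) \<in> Kset" using j k comm[of j] unfolding Kset_def by auto
          ultimately show "TM (\<eta> j) \<in> S" by simp
        qed
        have uc': "UC (insert (TN k) S)" using less.prems(2) succ unfolding UC_def by auto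
        have "E S = E (insert z S)" unfolding zk
          by (rule step_TN[OF k _ less.prems(2) uc' succ]) (use z zk in simp)
        also have "\<dots> = E Kset" using less.hyps[OF lt sub] uc' zk by simp
        finally have ?thesis .
      }
      moreover
      { fix k assume zk: "z = TM k"
        then have k: "k < m" "\<xi> k = i" using z by (auto simp: Kset_def)
        have succ: "\<forall>j<length \<beta>. \<eta> j = k \<and> \<not> \<beta>!j \<longrightarrow> TN (\<tau> j) \<in> S"
        proof (intro allI impI)
          fix j assume j: "j < length \<beta>" "\<eta> j = k \<and> \<not> \<beta>!j"
          have "(z, PB j) \<in> ?r" using zk j by (auto simp: comp_graph_def)
          moreover have "(PB j, TN (\<tau> j)) \<in> ?r" using j by (auto simp: comp_graph_def)
          ultimately have "(z, TN (\<tau> j)) \<in> ?r\<^sup>+" by auto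
          then have "TN (\<tau> j) \<notin> Kset - S" by (rule zmin)
          moreover have "TN (\<tau> j) \<in> Kset" using j k comm[of j] unfolding Kset_def by auto
          ultimately show "TN (\<tau> j) \<in> S" by simp
        qed
        have uc': "UC (insert (TM k) S)" using less.prems(2) succ unfolding UC_def by auto
        have "E S = E (insert z S)" unfolding zk
          by (rule step_TM[OF k _ less.prems(2) uc' succ]) (use z zk in simp)
        also have "\<dots> = E Kset" using less.hyps[OF lt sub] uc' zk by simp
        finally have ?thesis .
      }
      ultimately show ?thesis using z by (auto simp: Kset_def)
    qed
  qed
qed

lemma final:
  assumes acyc: "acyclic (comp_graph \<alpha> \<beta> \<gamma> \<sigma> \<tau> \<eta> \<theta>)"
  shows "ccomp C (Hm (msubst B \<gamma> (\<xi> \<circ> \<theta>) As i (cid B a0) f))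
      (ccomp C (vcomp C n m \<zeta> \<xi> \<phi> \<psi> (As[i := a0])) (Fm (msubst B \<alpha> (\<zeta> \<circ> \<sigma>) As i f (cid B a0))))
    = ccomp C (Hm (msubst B \<gamma> (\<xi> \<circ> \<theta>) As i f (cid B a1)))
      (ccomp C (vcomp C n m \<zeta> \<xi> \<phi> \<psi> (As[i := a1])) (Fm (msubst B \<alpha> (\<zeta> \<circ> \<sigma>) As i (cid B a1) f)))"
  unfolding E_start E_end using iterate[OF acyc, of "{}"] by (simp add: UC_def)

end

theorem mainTheorem4:
  fixes B :: "('o,'m) category" and C :: "('c,'d) category"
    and \<alpha> \<beta> \<gamma> :: "bool list"
    and \<sigma> \<tau> \<eta> \<theta> \<zeta> \<xi> :: "nat \<Rightarrow> nat" and n m l :: nat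
    and Fo Go Ho :: "'o list \<Rightarrow> 'c" and Fm Gm Hm :: "'m list \<Rightarrow> 'd"
    and \<phi> \<psi> :: "'o list \<Rightarrow> 'd"
  assumes "is_category B" and "is_category C"
    and "mvfunctor B C \<alpha> Fo Fm" and "mvfunctor B C \<beta> Go Gm" and "mvfunctor B C \<gamma> Ho Hm"
    and "is_transformation B C \<alpha> \<beta> \<sigma> \<tau> n Fo Go \<phi>"
    and "is_transformation B C \<beta> \<gamma> \<eta> \<theta> m Go Ho \<psi>"
    and "\<forall>i<n. dinatural_in B C \<alpha> \<beta> \<sigma> \<tau> n Fm Gm \<phi> i"
    and "\<forall>i<m. dinatural_in B C \<beta> \<gamma> \<eta> \<theta> m Gm Hm \<psi> i"
    and "is_pushout n m (length \<beta>) \<tau> \<eta> l \<zeta> \<xi>"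
    and "acyclic (comp_graph \<alpha> \<beta> \<gamma> \<sigma> \<tau> \<eta> \<theta>)"
  shows "\<forall>i<l. dinatural_in B C \<alpha> \<gamma> (\<zeta> \<circ> \<sigma>) (\<xi> \<circ> \<theta>) l Fm Hm (vcomp C n m \<zeta> \<xi> \<phi> \<psi>) i"
proof (intro allI impI)
  fix i assume i: "i < l"
  show "dinatural_in B C \<alpha> \<gamma> (\<zeta> \<circ> \<sigma>) (\<xi> \<circ> \<theta>) l Fm Hm (vcomp C n m \<zeta> \<xi> \<phi> \<psi>) i"
    unfolding dinatural_in_def Let_def
  proof (intro allI impI)
    fix As f assume a: "length As = l \<and> set As \<subseteq> cobj B \<and> f \<in> carr B"
    interpret c: ctx B C \<alpha> \<beta> \<gamma> \<sigma> \<tau> \<eta> \<theta> \<zeta> \<xi> n m l Fo Go Ho Fm Gm Hm \<phi> \<psi> i As f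
      using assms i a by unfold_locales auto
    show "ccomp C (Hm (msubst B \<gamma> (\<xi> \<circ> \<theta>) As i (cid B (cdom B f)) f))
           (ccomp C (vcomp C n m \<zeta> \<xi> \<phi> \<psi> (As[i := cdom B f])) (Fm (msubst B \<alpha> (\<zeta> \<circ> \<sigma>) As i f (cid B (cdom B f))))) =
          ccomp C (Hm (msubst B \<gamma> (\<xi> \<circ> \<theta>) As i f (cid B (ccod B f))))
           (ccomp C (vcomp C n m \<zeta> \<xi> \<phi> \<psi> (As[i := ccod B f])) (Fm (msubst B \<alpha> (\<zeta> \<circ> \<sigma>) As i (cid B (ccod B f)) f)))"
      by (rule c.final) (rule assms(11))
  qed
qed

end
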